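(* Let $Z$ be a decision structure and $H$ a module of $Z$. Let $Z/H$ be the module contraction of $H$ in $Z$, in which the node $H$ is labelled by the derived action $(H_B,H_R)$ of the decision structure $Z[H]$ and each node $\{v\}$, $v\notin H$, is labelled by the action labelling $v$ in $Z$. Then $Z_B=(Z/H)_B$, i.e. $Z(w)_B(w)=(Z/H)(w)_B(w)$ for every state $w$.
   Context: Fix sets $\mathbb{W}$ (states), $\mathbb{S}$ (signals), $\mathcal{R}$ (return values). An action is a pair $\alpha=(\alpha_B,\alpha_R)$ with $\alpha_B:\mathbb{W}\to\mathbb{S}$, $\alpha_R:\mathbb{W}\to\mathcal{R}$. A decision structure is a finite directed acyclic graph $Z=(N,A)$, $A\subseteq N\times N$, with a unique source, an arc labelling $\ell:A\to\mathcal{R}$ and a node labelling $\eta$ by actions, such that distinct arcs leaving the same node have distinct labels; the arc out of $v$ labelled $r$, if it exists, is the $r$-arc out of $v$. For a state $w$, $Z(w)$ is computed by starting at the source and, at node $v$ with $\eta(v)=\alpha$, moving along the $\alpha_R(w)$-arc if it exists and otherwise outputting $\alpha$. The derived action of $Z$ is $(Z_B,Z_R)$ with $Z_B(w)=Z(w)_B(w)$ and $Z_R(w)=Z(w)_R(w)$. For $X\subseteq N$, $Z[X]$ is the induced subgraph with inherited labels. $X\subseteq N(Z)$ is a module if $Z[X]$ has a unique source and for every $v\notin X$: (i) every arc from $v$ into $X$ ends at the source of $Z[X]$; (ii) if some $x\in X$ has an $r$-labelled arc to $v$, then every $x'\in X$ has an $r$-arc ending at $v$ or in $X$. For a module $H$,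 the module contraction $Z/H$ is the graph with node set $\{H\}\cup\{\{v\}:v\notin H\}$ and an arc $(S,T)$, $S\ne T$, labelled $r$ whenever some $r$-labelled arc of $Z$ goes from a node of $S$ to a node of $T$ (this is a decision structure). *)

theory Defs
  imports Main
begin

text \<open>An action: a pair (alpha_B, alpha_R) of functions on states.\<close>
type_synonym ('w,'s,'r) action = "('w \<Rightarrow> 's) \<times> ('w \<Rightarrow> 'r)"

text \<open>A (candidate) decision structure: node set, arc set, arc labelling, node labelling.
  The arc labelling is a total function on pairs; only its values on arcs matter.\<close>
record ('n,'w,'s,'r) dstruct =
  nodes :: "'n set"
  arcs  :: "('n \<times> 'n) set"
  alab  :: "'n \<times> 'n \<Rightarrow> 'r"
  nlab  :: "'n \<Rightarrow> ('w,'s,'r) action"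

definition is_source :: "('n,'w,'s,'r) dstruct \<Rightarrow> 'n \<Rightarrow> bool" where
  "is_source Z v \<longleftrightarrow> v \<in> nodes Z \<and> (\<forall>u \<in> nodes Z. (u, v) \<notin> arcs Z)"

definition unique_source :: "('n,'w,'s,'r) dstruct \<Rightarrow> bool" where
  "unique_source Z \<longleftrightarrow> (\<exists>!v. is_source Z v)"

definition source :: "('n,'w,'s,'r) dstruct \<Rightarrow> 'n" where
  "source Z = (THE v. is_source Z v)"

definition decision_structure :: "('n,'w,'s,'r) dstruct \<Rightarrow> bool" where
  "decision_structure Z \<longleftrightarrow>
     finite (nodes Z) \<and>
     arcs Z \<subseteq> nodes Z \<times> nodes Z \<and>
     acyclic (arcs Z) \<and>
     unique_source Z \<and>
     (\<forall>v u1 u2. (v, u1) \<in> arcs Z \<and> (v, u2) \<in> arcs Z \<and> u1 \<noteq> u2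
                \<longrightarrow> alab Z (v, u1) \<noteq> alab Z (v, u2))"

inductive outputs :: "('n,'w,'s,'r) dstruct \<Rightarrow> 'w \<Rightarrow> 'n \<Rightarrow> ('w,'s,'r) action \<Rightarrow> bool"
  for Z w where
  stop: "\<not> (\<exists>u. (v, u) \<in> arcs Z \<and> alab Z (v, u) = snd (nlab Z v) w)
          \<Longrightarrow> outputs Z w v (nlab Z v)"
| move: "(v, u) \<in> arcs Z \<Longrightarrow> alab Z (v, u) = snd (nlab Z v) w
          \<Longrightarrow> outputs Z w u \<alpha> \<Longrightarrow> outputs Z w v \<alpha>"

definition eval :: "('n,'w,'s,'r) dstruct \<Rightarrow> 'w \<Rightarrow> ('w,'s,'r) action" where
  "eval Z w = (THE \<alpha>. outputs Z w (source Z) \<alpha>)"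

definition derived_action :: "('n,'w,'s,'r) dstruct \<Rightarrow> ('w,'s,'r) action" where
  "derived_action Z = ((\<lambda>w. fst (eval Z w) w), (\<lambda>w. snd (eval Z w) w))"

definition induced :: "('n,'w,'s,'r) dstruct \<Rightarrow> 'n set \<Rightarrow> ('n,'w,'s,'r) dstruct" where
  "induced Z X = Z\<lparr>nodes := X, arcs := arcs Z \<inter> (X \<times> X)\<rparr>"

definition is_module :: "('n,'w,'s,'r) dstruct \<Rightarrow> 'n set \<Rightarrow> bool" where
  "is_module Z X \<longleftrightarrow>
     X \<subseteq> nodes Z \<and>
     unique_source (induced Z X) \<and>
     (\<forall>v \<in> nodes Z - X.
        (\<forall>x \<in> X. (v, x) \<in> arcs Z \<longrightarrow> x = source (induced Z X)) \<and>
        (\<forall>x \<in> X. (x, v) \<in> arcs Z \<longrightarrow>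
           (\<forall>x' \<in> X. \<exists>y. (x', y) \<in> arcs Z \<and> alab Z (x', y) = alab Z (x, v)
                          \<and> (y = v \<or> y \<in> X))))"

text \<open>An arc (S,T), S \<noteq> T, is present
  iff some arc of Z goes from S to T, and is labelled by the label of such an arc
  (this label is unique when H is a module).\<close>
definition contraction :: "('n,'w,'s,'r) dstruct \<Rightarrow> 'n set \<Rightarrow> ('n set,'w,'s,'r) dstruct" where
  "contraction Z H =
     \<lparr> nodes = {H} \<union> {{v} | v. v \<in> nodes Z - H},
       arcs = {(S, T). S \<in> {H} \<union> {{v} | v. v \<in> nodes Z - H} \<and>
                       T \<in> {H} \<union> {{v} | v. v \<in> nodes Z - H} \<and> S \<noteq> T \<and>
                       (\<exists>a \<in> S. \<exists>b \<in> T. (a, b) \<in> arcs Z)},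
       alab = (\<lambda>(S, T). SOME r. \<exists>a \<in> S. \<exists>b \<in> T. (a, b) \<in> arcs Z \<and> alab Z (a, b) = r),
       nlab = (\<lambda>S. if S = H then derived_action (induced Z H) else nlab Z (THE v. S = {v})) \<rparr>"

end

theory Submission
  imports Defs
begin

lemma outputs_unique:
  assumes D: "\<forall>v u1 u2. (v, u1) \<in> arcs Z \<and> (v, u2) \<in> arcs Z \<and> u1 \<noteq> u2
                \<longrightarrow> alab Z (v, u1) \<noteq> alab Z (v, u2)"
  shows "outputs Z w v a \<Longrightarrow> outputs Z w v b \<Longrightarrow> a = b"
proof (induction arbitrary: b rule: outputs.induct)
  case (stop v)
  from stop.prems show ?case
  proof cases
    case stop then show ?thesis by simp
  next
    case (move u) then show ?thesis using stop.hyps by blast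
  qed
next
  case (move v u \<alpha>)
  note IH = move.IH
  note h1 = move.hyps(1,2)
  from move.prems show ?case
  proof cases
    case stop then show ?thesis using move.hyps by blast
  next
    case (move u')
    then have "u' = u" using D h1 by metis
    then show ?thesis using IH move(3) by simp
  qed
qed

lemma outputs_exists:
  assumes "wf ((arcs Z)\<inverse>)"
  shows "\<exists>\<alpha>. outputs Z w v \<alpha>"
  using assms
proof (induction v rule: wf_induct_rule)
  case (less v)
  show ?case
  proof (cases "\<exists>u. (v, u) \<in> arcs Z \<and> alab Z (v, u) = snd (nlab Z v) w")
    case True
    then obtain u where u: "(v, u) \<in> arcs Z" "alab Z (v, u) = snd (nlab Z v) w" by blast
    then obtain \<alpha> where "outputs Z w u \<alpha>" using less by blast
    then show ?thesis using u outputs.move by metis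
  next
    case False
    then show ?thesis using outputs.stop by metis
  qed
qed

locale mctx =
  fixes Z :: "('n,'w,'s,'r) dstruct" and H :: "'n set"
  assumes DS: "decision_structure Z" and MOD: "is_module Z H"
begin

abbreviation "Zh \<equiv> induced Z H"
abbreviation "C \<equiv> contraction Z H"
definition "h = source Zh"

lemma fin: "finite (nodes Z)" using DS unfolding decision_structure_def by blast
lemma sub: "arcs Z \<subseteq> nodes Z \<times> nodes Z" using DS unfolding decision_structure_def by blast
lemma acyc: "acyclic (arcs Z)" using DS unfolding decision_structure_def by blast
lemma usrc: "unique_source Z" using DS unfolding decision_structure_def by blast
lemma dist: "\<forall>v u1 u2. (v, u1) \<in> arcs Z \<and> (v, u2) \<in> arcs Z \<and> u1 \<noteq> u2
                \<longrightarrow> alab Z (v, u1) \<noteq> alab Z (v, u2)" using DS unfolding decision_structure_def by blast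

lemma HN: "H \<subseteq> nodes Z" using MOD unfolding is_module_def by blast
lemma uh: "unique_source Zh" using MOD unfolding is_module_def by blast
lemma modi: "v \<in> nodes Z \<Longrightarrow> v \<notin> H \<Longrightarrow> x \<in> H \<Longrightarrow> (v, x) \<in> arcs Z \<Longrightarrow> x = h"
  using MOD unfolding is_module_def h_def by blast
lemma modii: "v \<in> nodes Z \<Longrightarrow> v \<notin> H \<Longrightarrow> x \<in> H \<Longrightarrow> (x, v) \<in> arcs Z \<Longrightarrow> x' \<in> H \<Longrightarrow>
   \<exists>y. (x', y) \<in> arcs Z \<and> alab Z (x', y) = alab Z (x, v) \<and> (y = v \<or> y \<in> H)"
  using MOD unfolding is_module_def by blast

lemma Zh_simps[simp]: "nodes Zh = H" "arcs Zh = arcs Z \<inter> (H \<times> H)" "alab Zh = alab Z" "nlab Zh = nlab Z"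
  by (simp_all add: induced_def)

lemma h_src: "is_source Zh h"
  using uh unfolding unique_source_def h_def source_def by (rule theI')

lemma hH: "h \<in> H" using h_src unfolding is_source_def by simp

lemma h_noin: "u \<in> H \<Longrightarrow> (u, h) \<notin> arcs Z" using h_src unfolding is_source_def by auto

lemma wfc: "wf ((arcs Z)\<inverse>)"
proof -
  have "finite (arcs Z)" using fin sub by (meson finite_SigmaI finite_subset)
  then show ?thesis using acyc by (rule finite_acyclic_wf_converse)
qed

lemma sink: "\<exists>s\<in>H. \<forall>y. (s, y) \<in> arcs Z \<longrightarrow> y \<notin> H"
proof -
  have "\<exists>z\<in>H. \<forall>y. (y, z) \<in> (arcs Z)\<inverse> \<longrightarrow> y \<notin> H"
    by (rule wfc[unfolded wf_eq_minimal, rule_format, OF hH])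
  then show ?thesis by simp
qed

lemma sink_arc:
  assumes "a \<in> H" "u \<notin> H" "(a, u) \<in> arcs Z" "s \<in> H" "\<forall>y. (s, y) \<in> arcs Z \<longrightarrow> y \<notin> H"
  shows "(s, u) \<in> arcs Z \<and> alab Z (s, u) = alab Z (a, u)"
proof -
  have "u \<in> nodes Z" using assms(3) sub by blast
  then obtain y where "(s, y) \<in> arcs Z" "alab Z (s, y) = alab Z (a, u)" "y = u \<or> y \<in> H"
    using modii assms by blast
  then show ?thesis using assms(5) by blast
qed

lemma lab_unique:
  assumes "x \<in> H" "u \<notin> H" "(x, u) \<in> arcs Z" "a \<in> H" "(a, u) \<in> arcs Z"
  shows "alab Z (a, u) = alab Z (x, u)"
  using sink sink_arc assms by metis

lemma no_lab:
  assumes "x \<in> H" "\<not> (\<exists>y. (x, y) \<in> arcs Z \<and> alab Z (x, y) = r)" "a \<in> H" "u \<notin> H" "(a, u) \<in> arcs Z"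
  shows "alab Z (a, u) \<noteq> r"
proof -
  have "u \<in> nodes Z" using assms(5) sub by blast
  then show ?thesis using modii[of u a x] assms by blast
qed


lemma C_nodes: "nodes C = {H} \<union> {{v} | v. v \<in> nodes Z - H}"
  by (simp add: contraction_def)

lemma C_arcs: "(S, T) \<in> arcs C \<longleftrightarrow> S \<in> nodes C \<and> T \<in> nodes C \<and> S \<noteq> T \<and> (\<exists>a\<in>S. \<exists>b\<in>T. (a, b) \<in> arcs Z)"
  by (simp add: contraction_def)

lemma C_alab: assumes "(S, T) \<in> arcs C"
  shows "\<exists>a\<in>S. \<exists>b\<in>T. (a, b) \<in> arcs Z \<and> alab C (S, T) = alab Z (a, b)"
proof -
  have "\<exists>a\<in>S. \<exists>b\<in>T. (a, b) \<in> arcs Z" using assms unfolding C_arcs by (elim conjE)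
  then have ex: "\<exists>r. \<exists>a\<in>S. \<exists>b\<in>T. (a, b) \<in> arcs Z \<and> alab Z (a, b) = r" by blast
  have eq: "alab C (S, T) = (SOME r. \<exists>a\<in>S. \<exists>b\<in>T. (a, b) \<in> arcs Z \<and> alab Z (a, b) = r)"
    by (simp add: contraction_def)
  obtain a b where ab: "a \<in> S" "b \<in> T" "(a, b) \<in> arcs Z"
    "alab Z (a, b) = (SOME r. \<exists>a\<in>S. \<exists>b\<in>T. (a, b) \<in> arcs Z \<and> alab Z (a, b) = r)"
    using someI_ex[OF ex] by blast
  have "alab C (S, T) = alab Z (a, b)" using eq ab(4) by (rule trans[OF _ sym])
  then show ?thesis using ab(1-3) by blast
qed

lemma C_nlabH: "nlab C H = derived_action Zh"
  by (simp add: contraction_def)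

lemma C_nlab1: "v \<notin> H \<Longrightarrow> nlab C {v} = nlab Z v"
  by (auto simp add: contraction_def)

lemma C_disj: "T1 \<in> nodes C \<Longrightarrow> T2 \<in> nodes C \<Longrightarrow> b \<in> T1 \<Longrightarrow> b \<in> T2 \<Longrightarrow> T1 = T2"
  unfolding C_nodes by auto

lemma C_dist: "\<forall>v u1 u2. (v, u1) \<in> arcs C \<and> (v, u2) \<in> arcs C \<and> u1 \<noteq> u2
                \<longrightarrow> alab C (v, u1) \<noteq> alab C (v, u2)"
proof (intro allI impI)
  fix S T1 T2
  assume A: "(S, T1) \<in> arcs C \<and> (S, T2) \<in> arcs C \<and> T1 \<noteq> T2"
  obtain a1 b1 where 1: "a1 \<in> S" "b1 \<in> T1" "(a1, b1) \<in> arcs Z" "alab C (S, T1) = alab Z (a1, b1)"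
    using C_alab A by blast
  obtain a2 b2 where 2: "a2 \<in> S" "b2 \<in> T2" "(a2, b2) \<in> arcs Z" "alab C (S, T2) = alab Z (a2, b2)"
    using C_alab A by blast
  have N: "S \<in> nodes C" "T1 \<in> nodes C" "T2 \<in> nodes C" "S \<noteq> T1" "S \<noteq> T2" using A C_arcs by auto
  have b12: "b1 \<noteq> b2" using C_disj N 1 2 A by blast
  show "alab C (S, T1) \<noteq> alab C (S, T2)"
  proof (cases "S = H")
    case True
    then obtain u1 where u1: "T1 = {u1}" "u1 \<notin> H" using N unfolding C_nodes by auto
    obtain u2 where u2: "T2 = {u2}" "u2 \<notin> H" using N True unfolding C_nodes by auto
    obtain s where s: "s \<in> H" "\<forall>y. (s, y) \<in> arcs Z \<longrightarrow> y \<notin> H" using sink by blast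
    have s1: "(s, u1) \<in> arcs Z" "alab Z (s, u1) = alab Z (a1, u1)"
      using sink_arc[OF _ u1(2) _ s] 1 u1 True by auto
    have s2: "(s, u2) \<in> arcs Z" "alab Z (s, u2) = alab Z (a2, u2)"
      using sink_arc[OF _ u2(2) _ s] 2 u2 True by auto
    have ne: "u1 \<noteq> u2" using b12 1 2 u1 u2 by auto
    have d: "alab Z (s, u1) \<noteq> alab Z (s, u2)" using dist s1(1) s2(1) ne by blast
    have e1: "alab C (S, T1) = alab Z (s, u1)" using 1(2,4) u1(1) s1(2) by simp
    have e2: "alab C (S, T2) = alab Z (s, u2)" using 2(2,4) u2(1) s2(2) by simp
    show ?thesis using d e1 e2 by simp
  next
    case False
    then obtain v where "S = {v}" using N unfolding C_nodes by auto
    then have "a1 = v" "a2 = v" using 1 2 by auto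
    have d: "alab Z (v, b1) \<noteq> alab Z (v, b2)" using dist 1(3) 2(3) b12 \<open>a1 = v\<close> \<open>a2 = v\<close> by blast
    then show ?thesis using 1(4) 2(4) \<open>a1 = v\<close> \<open>a2 = v\<close> by simp
  qed
qed

lemma Zh_dist: "\<forall>v u1 u2. (v, u1) \<in> arcs Zh \<and> (v, u2) \<in> arcs Zh \<and> u1 \<noteq> u2
                \<longrightarrow> alab Zh (v, u1) \<noteq> alab Zh (v, u2)"
  using dist by simp

lemma src: "is_source Z (source Z)"
  using usrc unfolding unique_source_def source_def by (rule theI')

lemma src_h: "source Z \<in> H \<Longrightarrow> source Z = h"
proof -
  assume "source Z \<in> H"
  then have "is_source Zh (source Z)" using src HN unfolding is_source_def by auto
  then show ?thesis using uh h_src unfolding unique_source_def by blast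
qed

lemma C_source: "source C = (if source Z \<in> H then H else {source Z})"
proof -
  let ?s = "source Z"
  let ?S = "if ?s \<in> H then H else {?s}"
  have s: "?s \<in> nodes Z" "\<forall>u\<in>nodes Z. (u, ?s) \<notin> arcs Z" using src unfolding is_source_def by auto
  have isS: "is_source C ?S"
    unfolding is_source_def
  proof
    show "?S \<in> nodes C" using s unfolding C_nodes by auto
    show "\<forall>T\<in>nodes C. (T, ?S) \<notin> arcs C"
    proof (intro ballI notI)
      fix T assume T: "T \<in> nodes C" "(T, ?S) \<in> arcs C"
      then obtain a b where ab: "a \<in> T" "b \<in> ?S" "(a, b) \<in> arcs Z" "T \<noteq> ?S" using C_arcs by blast
      have aN: "a \<in> nodes Z" using ab sub by blast
      show False
      proof (cases "?s \<in> H")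
        case True
        then have "T \<noteq> H" using ab by simp
        then obtain u where u: "T = {u}" "u \<in> nodes Z" "u \<notin> H" using T unfolding C_nodes by auto
        have "b = h" using modi[of u b] u ab True HN by auto
        then show False using src_h True s ab u by auto
      next
        case False
        then show False using s ab aN by auto
      qed
    qed
  qed
  have un: "T = ?S" if T: "is_source C T" for T
  proof (rule ccontr)
    assume ne: "T \<noteq> ?S"
    have TN: "T \<in> nodes C" and noin: "\<forall>U\<in>nodes C. (U, T) \<notin> arcs C" using T unfolding is_source_def by auto
    show False
    proof (cases "T = H")
      case True
      then have nsH: "?s \<notin> H" using ne by auto
      then have "h \<noteq> ?s" using hH by auto
      moreover have "is_source Z h \<Longrightarrow> h = ?s" using usrc src unfolding unique_source_def by blast
      ultimately obtain u where u: "u \<in> nodes Z" "(u, h) \<in> arcs Z" using hH HN unfolding is_source_def by auto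
      have "u \<notin> H" using h_noin u by auto
      then have "({u}, H) \<in> arcs C" using u hH unfolding C_arcs C_nodes by auto
      then show False using noin True \<open>u \<notin> H\<close> u unfolding C_nodes by auto
    next
      case False
      then obtain v where v: "T = {v}" "v \<in> nodes Z" "v \<notin> H" using TN unfolding C_nodes by auto
      then have "v \<noteq> ?s" using ne by auto
      moreover have "is_source Z v \<Longrightarrow> v = ?s" using usrc src unfolding unique_source_def by blast
      ultimately obtain u where u: "u \<in> nodes Z" "(u, v) \<in> arcs Z" using v unfolding is_source_def by auto
      have "u \<noteq> v" using u acyc unfolding acyclic_def by auto
      define U where "U = (if u \<in> H then H else {u})"
      have UN: "U \<in> nodes C" using u unfolding U_def C_nodes by auto
      have "U \<noteq> T" using v \<open>u \<noteq> v\<close> unfolding U_def by auto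
      then have "(U, T) \<in> arcs C" using UN TN u v unfolding C_arcs U_def by auto
      then show False using noin UN by auto
    qed
  qed
  show ?thesis unfolding source_def[of C] using isS un by (rule the_equality)
qed

lemma exitH:
  assumes "x \<in> H" "outputs Zh w h (nlab Z x)"
    "(\<alpha> = nlab Z x \<and> \<not> (\<exists>y. (x, y) \<in> arcs Z \<and> alab Z (x, y) = snd (nlab Z x) w)) \<or>
     (\<exists>u. u \<notin> H \<and> (x, u) \<in> arcs Z \<and> alab Z (x, u) = snd (nlab Z x) w \<and>
          (\<exists>\<beta>. outputs C w {u} \<beta> \<and> fst \<beta> w = fst \<alpha> w))"
  shows "\<exists>\<beta>. outputs C w H \<beta> \<and> fst \<beta> w = fst \<alpha> w"
proof -
  have "eval Zh w = nlab Z x"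
    unfolding eval_def[of Zh] h_def[symmetric]
    by (rule the_equality, rule assms(2), erule outputs_unique[OF Zh_dist _ assms(2)])
  then have nl: "fst (nlab C H) w = fst (nlab Z x) w" "snd (nlab C H) w = snd (nlab Z x) w"
    by (simp_all add: C_nlabH derived_action_def)
  from assms(3) show ?thesis
  proof
    assume A: "\<alpha> = nlab Z x \<and> \<not> (\<exists>y. (x, y) \<in> arcs Z \<and> alab Z (x, y) = snd (nlab Z x) w)"
    have "\<not> (\<exists>T. (H, T) \<in> arcs C \<and> alab C (H, T) = snd (nlab C H) w)"
    proof
      assume "\<exists>T. (H, T) \<in> arcs C \<and> alab C (H, T) = snd (nlab C H) w"
      then obtain T where T: "(H, T) \<in> arcs C" "alab C (H, T) = snd (nlab Z x) w" using nl by auto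
      then obtain a b where ab: "a \<in> H" "b \<in> T" "(a, b) \<in> arcs Z" "alab C (H, T) = alab Z (a, b)"
        using C_alab by blast
      have "T \<in> nodes C" "T \<noteq> H" using T C_arcs by auto
      then obtain u where "T = {u}" "u \<notin> H" unfolding C_nodes by auto
      then show False using no_lab[OF assms(1) _ ab(1) _ ] A ab T by auto
    qed
    then have "outputs C w H (nlab C H)" by (rule outputs.stop)
    moreover have "fst (nlab C H) w = fst \<alpha> w" using nl A by simp
    ultimately show ?thesis by blast
  next
    assume "\<exists>u. u \<notin> H \<and> (x, u) \<in> arcs Z \<and> alab Z (x, u) = snd (nlab Z x) w \<and>
          (\<exists>\<beta>. outputs C w {u} \<beta> \<and> fst \<beta> w = fst \<alpha> w)"
    then obtain u \<beta> where u: "u \<notin> H" "(x, u) \<in> arcs Z" "alab Z (x, u) = snd (nlab Z x) w"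
      "outputs C w {u} \<beta>" "fst \<beta> w = fst \<alpha> w" by blast
    have uN: "u \<in> nodes Z" using u sub by auto
    have arc: "(H, {u}) \<in> arcs C" using u uN assms(1) unfolding C_arcs C_nodes by auto
    then obtain a b where ab: "a \<in> H" "b \<in> {u}" "(a, b) \<in> arcs Z" "alab C (H, {u}) = alab Z (a, b)"
      using C_alab by blast
    then have "alab C (H, {u}) = alab Z (x, u)" using lab_unique[OF assms(1) u(1,2)] by auto
    then have "alab C (H, {u}) = snd (nlab C H) w" using u nl by simp
    then have "outputs C w H \<beta>" by (rule outputs.move[OF arc _ u(4)])
    then show ?thesis using u(5) by blast
  qed
qed


lemma key:
  "outputs Z w v \<alpha> \<Longrightarrow> v \<in> nodes Z \<Longrightarrow>
   (v \<notin> H \<longrightarrow> (\<exists>\<beta>. outputs C w {v} \<beta> \<and> fst \<beta> w = fst \<alpha> w)) \<and>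
   (v \<in> H \<longrightarrow> (\<exists>x\<in>H. outputs Zh w v (nlab Z x) \<and>
      ((\<alpha> = nlab Z x \<and> \<not> (\<exists>y. (x, y) \<in> arcs Z \<and> alab Z (x, y) = snd (nlab Z x) w)) \<or>
       (\<exists>u. u \<notin> H \<and> (x, u) \<in> arcs Z \<and> alab Z (x, u) = snd (nlab Z x) w \<and>
          (\<exists>\<beta>. outputs C w {u} \<beta> \<and> fst \<beta> w = fst \<alpha> w)))))"
proof (induction rule: outputs.induct)
  case (stop v)
  have P1: "\<exists>\<beta>. outputs C w {v} \<beta> \<and> fst \<beta> w = fst (nlab Z v) w" if vH: "v \<notin> H"
  proof -
    have "\<not> (\<exists>T. ({v}, T) \<in> arcs C \<and> alab C ({v}, T) = snd (nlab C {v}) w)"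
    proof
      assume "\<exists>T. ({v}, T) \<in> arcs C \<and> alab C ({v}, T) = snd (nlab C {v}) w"
      then obtain T where T: "({v}, T) \<in> arcs C" "alab C ({v}, T) = snd (nlab Z v) w"
        using C_nlab1[OF vH] by auto
      then obtain a b where "a \<in> {v}" "b \<in> T" "(a, b) \<in> arcs Z" "alab C ({v}, T) = alab Z (a, b)"
        using C_alab by blast
      then show False using stop.hyps T by auto
    qed
    then have "outputs C w {v} (nlab C {v})" by (rule outputs.stop)
    then have "outputs C w {v} (nlab Z v)" using C_nlab1[OF vH] by simp
    then show ?thesis by blast
  qed
  have P2: "outputs Zh w v (nlab Z v)"
  proof -
    have "\<not> (\<exists>u. (v, u) \<in> arcs Zh \<and> alab Zh (v, u) = snd (nlab Zh v) w)" using stop.hyps by auto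
    then have "outputs Zh w v (nlab Zh v)" by (rule outputs.stop)
    then show ?thesis by simp
  qed
  have P3: "\<exists>x\<in>H. outputs Zh w v (nlab Z x) \<and>
      ((nlab Z v = nlab Z x \<and> \<not> (\<exists>y. (x, y) \<in> arcs Z \<and> alab Z (x, y) = snd (nlab Z x) w)) \<or>
       (\<exists>u. u \<notin> H \<and> (x, u) \<in> arcs Z \<and> alab Z (x, u) = snd (nlab Z x) w \<and>
          (\<exists>\<beta>. outputs C w {u} \<beta> \<and> fst \<beta> w = fst (nlab Z v) w)))" if vH: "v \<in> H"
    using vH P2 stop.hyps by (intro bexI[of _ v] conjI disjI1 refl) assumption+
  show ?case using P1 P3 by (intro conjI impI)
next
  case (move v u \<alpha>)
  have uN: "u \<in> nodes Z" using move.hyps(1) sub by auto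
  note IH = move.IH[OF uN]
  note IH1 = conjunct1[OF IH, rule_format]
  note IH2 = conjunct2[OF IH, rule_format]
  have nloop: "(u, u) \<notin> arcs Z" using acyc unfolding acyclic_def by auto
  show ?case
  proof (intro conjI impI)
    assume vH: "v \<notin> H"
    show "\<exists>\<beta>. outputs C w {v} \<beta> \<and> fst \<beta> w = fst \<alpha> w"
    proof (cases "u \<in> H")
      case False
      then obtain \<beta> where \<beta>: "outputs C w {u} \<beta>" "fst \<beta> w = fst \<alpha> w" using IH1[OF False] by blast
      have "v \<noteq> u" using nloop move.hyps(1) by auto
      then have arc: "({v}, {u}) \<in> arcs C" using move.prems uN vH False move.hyps(1)
        unfolding C_arcs C_nodes by auto
      then obtain a b where "a \<in> {v}" "b \<in> {u}" "(a, b) \<in> arcs Z" "alab C ({v}, {u}) = alab Z (a, b)"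
        using C_alab by blast
      then have "alab C ({v}, {u}) = snd (nlab C {v}) w" using move.hyps(2) C_nlab1[OF vH] by auto
      then have "outputs C w {v} \<beta>" by (rule outputs.move[OF arc _ \<beta>(1)])
      then show ?thesis using \<beta>(2) by blast
    next
      case True
      have uh: "u = h" using modi[OF move.prems vH True move.hyps(1)] .
      obtain x where x: "x \<in> H" "outputs Zh w u (nlab Z x)"
        "(\<alpha> = nlab Z x \<and> \<not> (\<exists>y. (x, y) \<in> arcs Z \<and> alab Z (x, y) = snd (nlab Z x) w)) \<or>
         (\<exists>u. u \<notin> H \<and> (x, u) \<in> arcs Z \<and> alab Z (x, u) = snd (nlab Z x) w \<and>
          (\<exists>\<beta>. outputs C w {u} \<beta> \<and> fst \<beta> w = fst \<alpha> w))"
        using IH2[OF True] by (elim bexE conjE)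
      have x2: "outputs Zh w h (nlab Z x)" using x(2) uh by simp
      obtain \<beta> where \<beta>: "outputs C w H \<beta>" "fst \<beta> w = fst \<alpha> w"
        using exitH[OF x(1) x2 x(3)] by blast
      have arc: "({v}, H) \<in> arcs C" using move.prems uN vH True move.hyps(1)
        unfolding C_arcs C_nodes by auto
      then obtain a b where ab: "a \<in> {v}" "b \<in> H" "(a, b) \<in> arcs Z" "alab C ({v}, H) = alab Z (a, b)"
        using C_alab by blast
      then have "b = h" using modi[OF move.prems vH] by auto
      then have "alab C ({v}, H) = snd (nlab C {v}) w" using ab uh move.hyps(2) C_nlab1[OF vH] by auto
      then have "outputs C w {v} \<beta>" by (rule outputs.move[OF arc _ \<beta>(1)])
      then show ?thesis using \<beta>(2) by blast
    qed
  next
    assume vH: "v \<in> H"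
    show "\<exists>x\<in>H. outputs Zh w v (nlab Z x) \<and>
      ((\<alpha> = nlab Z x \<and> \<not> (\<exists>y. (x, y) \<in> arcs Z \<and> alab Z (x, y) = snd (nlab Z x) w)) \<or>
       (\<exists>u. u \<notin> H \<and> (x, u) \<in> arcs Z \<and> alab Z (x, u) = snd (nlab Z x) w \<and>
          (\<exists>\<beta>. outputs C w {u} \<beta> \<and> fst \<beta> w = fst \<alpha> w)))"
    proof (cases "u \<in> H")
      case True
      obtain x where x: "x \<in> H" "outputs Zh w u (nlab Z x)"
        "(\<alpha> = nlab Z x \<and> \<not> (\<exists>y. (x, y) \<in> arcs Z \<and> alab Z (x, y) = snd (nlab Z x) w)) \<or>
         (\<exists>u. u \<notin> H \<and> (x, u) \<in> arcs Z \<and> alab Z (x, u) = snd (nlab Z x) w \<and>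
          (\<exists>\<beta>. outputs C w {u} \<beta> \<and> fst \<beta> w = fst \<alpha> w))"
        using IH2[OF True] by (elim bexE conjE)
      have "(v, u) \<in> arcs Zh" using vH True move.hyps(1) by simp
      moreover have "alab Zh (v, u) = snd (nlab Zh v) w" using move.hyps(2) by simp
      ultimately have xo: "outputs Zh w v (nlab Z x)" using x(2) by (rule outputs.move)
      show ?thesis using x(1) xo x(3) by (intro bexI[of _ x] conjI) assumption+
    next
      case False
      obtain \<beta> where \<beta>: "outputs C w {u} \<beta>" "fst \<beta> w = fst \<alpha> w" using IH1[OF False] by blast
      have "\<not> (\<exists>y. (v, y) \<in> arcs Zh \<and> alab Zh (v, y) = snd (nlab Zh v) w)"
      proof
        assume "\<exists>y. (v, y) \<in> arcs Zh \<and> alab Zh (v, y) = snd (nlab Zh v) w"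
        then obtain y where y: "(v, y) \<in> arcs Z" "y \<in> H" "alab Z (v, y) = snd (nlab Z v) w" by auto
        then have "y \<noteq> u" using False by auto
        then have "alab Z (v, y) \<noteq> alab Z (v, u)" using dist[rule_format, of v y u] y(1) move.hyps(1) by blast
        then show False using y(3) move.hyps(2) by simp
      qed
      then have "outputs Zh w v (nlab Zh v)" by (rule outputs.stop)
      then have "outputs Zh w v (nlab Z v)" by simp
      have ex: "\<exists>u'. u' \<notin> H \<and> (v, u') \<in> arcs Z \<and> alab Z (v, u') = snd (nlab Z v) w \<and>
          (\<exists>\<beta>. outputs C w {u'} \<beta> \<and> fst \<beta> w = fst \<alpha> w)"
        using False move.hyps(1,2) \<beta> by blast
      show ?thesis using vH \<open>outputs Zh w v (nlab Z v)\<close> ex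
        by (intro bexI[of _ v] conjI disjI2) assumption+
    qed
  qed
qed

end

theorem mainTheorem15:
  fixes Z :: "('n,'w,'s,'r) dstruct" and H :: "'n set"
  assumes "decision_structure Z" and "is_module Z H"
  shows "\<forall>w. fst (eval Z w) w = fst (eval (contraction Z H) w) w"
proof
  fix w
  interpret mctx Z H using assms by unfold_locales
  let ?s = "source Z"
  have sN: "?s \<in> nodes Z" using src unfolding is_source_def by auto
  obtain \<alpha> where \<alpha>: "outputs Z w ?s \<alpha>" using outputs_exists[OF wfc] by blast
  have e1: "eval Z w = \<alpha>" unfolding eval_def
    by (rule the_equality, rule \<alpha>, erule outputs_unique[OF dist _ \<alpha>])
  note K = key[OF \<alpha> sN]
  obtain \<beta> where \<beta>: "outputs C w (source C) \<beta>" "fst \<beta> w = fst \<alpha> w"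
  proof (cases "?s \<in> H")
    case True
    then have sh: "?s = h" by (rule src_h)
    have cs: "source C = H" using True C_source by simp
    obtain x where x: "x \<in> H" "outputs Zh w ?s (nlab Z x)"
        "(\<alpha> = nlab Z x \<and> \<not> (\<exists>y. (x, y) \<in> arcs Z \<and> alab Z (x, y) = snd (nlab Z x) w)) \<or>
         (\<exists>u. u \<notin> H \<and> (x, u) \<in> arcs Z \<and> alab Z (x, u) = snd (nlab Z x) w \<and>
          (\<exists>\<beta>. outputs C w {u} \<beta> \<and> fst \<beta> w = fst \<alpha> w))"
      using conjunct2[OF K, rule_format, OF True] by (elim bexE conjE)
    have x2: "outputs Zh w h (nlab Z x)" using x(2) sh by simp
    obtain \<beta> where b: "outputs C w H \<beta>" "fst \<beta> w = fst \<alpha> w"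
      using exitH[OF x(1) x2 x(3)] by blast
    show ?thesis using that[of \<beta>] b cs by simp
  next
    case False
    have cs: "source C = {?s}" using False C_source by simp
    obtain \<beta> where b: "outputs C w {?s} \<beta>" "fst \<beta> w = fst \<alpha> w"
      using conjunct1[OF K, rule_format, OF False] by blast
    show ?thesis using that[of \<beta>] b cs by simp
  qed
  have e2: "eval C w = \<beta>" unfolding eval_def[of C]
    by (rule the_equality, rule \<beta>(1), erule outputs_unique[OF C_dist _ \<beta>(1)])
  show "fst (eval Z w) w = fst (eval C w) w" using e1 e2 \<beta>(2) by simp
qed

end
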